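(* Let $p\geq 5$ be a prime, $q=2(p-1)$, and let $m,n,s,r$ be integers with $n\geq m+2>5$, $2\leq s<p$ and $1\leq r\leq s+3$. Put $t(s)=q(p^n+p^m+sp+s)$. Then in the May spectral sequence, $$E_1^{s+3-r,\,t(s)+s-r-1,\,*}=\begin{cases}\mathbb{Z}_p\{\mathbf{g}_1,\dots,\mathbf{g}_7\} & \text{if } r=1 \text{ and } s=p-1,\\ 0 & \text{otherwise,}\end{cases}$$ where $\mathbf{g}_1=a_n^{p-3}h_{3,0}h_{1,m}h_{n-2,2}h_{n,0}$, $\mathbf{g}_2=a_n^{p-3}h_{1,2}h_{m+1,0}h_{n-m,m}h_{n,0}$, $\mathbf{g}_3=a_{m+1}a_n^{p-4}h_{3,0}h_{n-m,m}h_{n-2,2}h_{n,0}$, $\mathbf{g}_4=a_n^{p-3}h_{3,0}h_{m-1,2}h_{n-m,m}h_{n,0}$, $\mathbf{g}_5=a_n^{p-3}h_{3,0}h_{m+1,0}h_{n-m,m}h_{n-2,2}$, $\mathbf{g}_6=a_3a_n^{p-4}h_{m+1,0}h_{n-m,m}h_{n-2,2}h_{n,0}$, $\mathbf{g}_7=a_m^{p-3}h_{3,0}h_{m,0}h_{m-2,2}h_{1,n}$.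
   Context: The May spectral sequence $\{E_r^{s,t,u},d_r\}$ (for the mod $p$ Steenrod algebra $A$, $p$ odd) converges to $\mathrm{Ext}_A^{s,t}(\mathbb{Z}_p,\mathbb{Z}_p)$ and has $E_1^{*,*,*}=E(h_{i,j}\mid i>0,j\geq 0)\otimes P(b_{i,j}\mid i>0,j\geq 0)\otimes P(a_k\mid k\geq 0)$ ($E$ exterior, $P$ polynomial), with $h_{i,j}\in E_1^{1,2(p^i-1)p^j,2i-1}$, $b_{i,j}\in E_1^{2,2(p^i-1)p^{j+1},p(2i-1)}$, $a_k\in E_1^{1,2p^k-1,2k+1}$; the $h_{i,j}$ anticommute with one another and all other pairs of generators commute. $E_1^{s,t,*}$ denotes the direct sum over all values of the third index. *)

theory Defs
  imports Main "HOL-Library.Multiset" "HOL-Computational_Algebra.Primes"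
begin

text \<open>A monomial is a triple (H, B, A): H is the (finite) set of exterior generators
  h_{i,j} occurring (each with exponent 0 or 1), B the multiset of polynomial
  generators b_{i,j}, A the multiset of polynomial generators a_k.
  Up to sign, these monomials form a Z_p-basis of E_1, and E_1^{s,t,*} is the
  Z_p-span of the monomials of internal bidegree (s,t).\<close>

type_synonym may_mono = "(nat \<times> nat) set \<times> (nat \<times> nat) multiset \<times> nat multiset"

definition valid_mono :: "may_mono \<Rightarrow> bool" where
  "valid_mono M = (case M of (H, B, A) \<Rightarrow>
      finite H \<and> (\<forall>(i,j)\<in>H. i > 0) \<and> (\<forall>(i,j)\<in>#B. i > 0))"

definition s_deg :: "may_mono \<Rightarrow> nat" where
  "s_deg M = (case M of (H, B, A) \<Rightarrow> card H + 2 * size B + size A)"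

definition t_deg :: "nat \<Rightarrow> may_mono \<Rightarrow> nat" where
  "t_deg p M = (case M of (H, B, A) \<Rightarrow>
      (\<Sum>(i,j)\<in>H. 2 * (p^i - 1) * p^j)
    + sum_mset (image_mset (\<lambda>(i,j). 2 * (p^i - 1) * p^(j+1)) B)
    + sum_mset (image_mset (\<lambda>k. 2 * p^k - 1) A))"

definition E1_basis :: "nat \<Rightarrow> nat \<Rightarrow> nat \<Rightarrow> may_mono set" where
  "E1_basis p s t = {M. valid_mono M \<and> s_deg M = s \<and> t_deg p M = t}"

definition g1 :: "nat \<Rightarrow> nat \<Rightarrow> nat \<Rightarrow> may_mono" where
  "g1 p m n = ({(3,0),(1,m),(n-2,2),(n,0)}, {#}, replicate_mset (p-3) n)"
definition g2 :: "nat \<Rightarrow> nat \<Rightarrow> nat \<Rightarrow> may_mono" where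
  "g2 p m n = ({(1,2),(m+1,0),(n-m,m),(n,0)}, {#}, replicate_mset (p-3) n)"
definition g3 :: "nat \<Rightarrow> nat \<Rightarrow> nat \<Rightarrow> may_mono" where
  "g3 p m n = ({(3,0),(n-m,m),(n-2,2),(n,0)}, {#}, add_mset (m+1) (replicate_mset (p-4) n))"
definition g4 :: "nat \<Rightarrow> nat \<Rightarrow> nat \<Rightarrow> may_mono" where
  "g4 p m n = ({(3,0),(m-1,2),(n-m,m),(n,0)}, {#}, replicate_mset (p-3) n)"
definition g5 :: "nat \<Rightarrow> nat \<Rightarrow> nat \<Rightarrow> may_mono" where
  "g5 p m n = ({(3,0),(m+1,0),(n-m,m),(n-2,2)}, {#}, replicate_mset (p-3) n)"
definition g6 :: "nat \<Rightarrow> nat \<Rightarrow> nat \<Rightarrow> may_mono" where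
  "g6 p m n = ({(m+1,0),(n-m,m),(n-2,2),(n,0)}, {#}, add_mset 3 (replicate_mset (p-4) n))"
definition g7 :: "nat \<Rightarrow> nat \<Rightarrow> nat \<Rightarrow> may_mono" where
  "g7 p m n = ({(3,0),(m,0),(m-2,2),(1,n)}, {#}, replicate_mset (p-3) m)"

end

theory Submission
  imports Defs
begin

definition val :: "nat \<Rightarrow> nat multiset \<Rightarrow> nat" where
  "val p M = sum_mset (image_mset (\<lambda>x. p ^ x) M)"

definition cf :: "nat \<Rightarrow> nat multiset \<Rightarrow> bool" where
  "cf p M = (\<forall>x. count M x < p)"

definition carry :: "nat \<Rightarrow> nat \<Rightarrow> nat multiset \<Rightarrow> nat multiset" where
  "carry p x M = M - replicate_mset p x + {#Suc x#}"

lemma val_empty[simp]: "val p {#} = 0" by (simp add: val_def)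
lemma val_add_mset[simp]: "val p (add_mset x M) = p ^ x + val p M" by (simp add: val_def)
lemma val_union[simp]: "val p (M + N) = val p M + val p N" by (simp add: val_def)
lemma val_replicate[simp]: "val p (replicate_mset k x) = k * p ^ x"
  by (induct k) (auto simp: val_def)

lemma val_ge_size: "p > 0 \<Longrightarrow> size M \<le> val p M"
proof (induct M)
  case (add x M)
  have "1 \<le> p ^ x" using add by simp
  moreover have "size M \<le> val p M" using add by simp
  ultimately show ?case by simp
qed simp

lemma val_shift: "(\<forall>x\<in>#F. x > 0) \<Longrightarrow> val p F = p * val p (image_mset (\<lambda>x. x - 1) F)"
proof (induct F)
  case empty then show ?case by simp
next
  case (add x F)
  then have "x > 0" by auto
  then have px: "p ^ x = p * p ^ (x - 1)" by (cases x) auto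
  have "val p F = p * val p (image_mset (\<lambda>x. x - 1) F)" using add by simp
  then show ?case using px by (simp add: distrib_left)
qed

definition shift :: "nat multiset \<Rightarrow> nat multiset" where
  "shift M = image_mset (\<lambda>x. x - 1) (filter_mset (\<lambda>x. 0 < x) M)"

lemma val_decomp: "val p M = count M 0 + p * val p (shift M)"
proof -
  have "M = filter_mset (\<lambda>x. x = 0) M + filter_mset (\<lambda>x. \<not> x = 0) M"
    by (rule multiset_partition)
  moreover have "filter_mset (\<lambda>x. \<not> x = 0) M = filter_mset (\<lambda>x. 0 < x) M"
    by (rule filter_mset_cong) auto
  ultimately have "val p M = val p (filter_mset (\<lambda>x. x = 0) M) + val p (filter_mset (\<lambda>x. 0 < x) M)"
    by (metis val_union)
  also have "filter_mset (\<lambda>x. x = 0) M = replicate_mset (count M 0) 0"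
    by (rule filter_eq_replicate_mset)
  also have "val p (filter_mset (\<lambda>x. 0 < x) M) = p * val p (shift M)"
    unfolding shift_def by (rule val_shift) auto
  finally show ?thesis by simp
qed

lemma count_shift: "count (shift M) y = count M (Suc y)"
proof -
  have "count (shift M) y = (\<Sum>z\<in>(\<lambda>x. x - 1) -` {y} \<inter> set_mset (filter_mset (\<lambda>x. 0 < x) M). count (filter_mset (\<lambda>x. 0 < x) M) z)"
    unfolding shift_def by (rule count_image_mset)
  also have "(\<lambda>x. x - 1) -` {y} \<inter> set_mset (filter_mset (\<lambda>x. 0 < x) M) = {Suc y} \<inter> set_mset M"
  proof (intro equalityI subsetI)
    fix z assume "z \<in> (\<lambda>x. x - 1) -` {y} \<inter> set_mset (filter_mset (\<lambda>x. 0 < x) M)"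
    then have "z - 1 = y" "0 < z" "z \<in># M" by auto
    then show "z \<in> {Suc y} \<inter> set_mset M" by simp
  qed auto
  also have "(\<Sum>z\<in>{Suc y} \<inter> set_mset M. count (filter_mset (\<lambda>x. 0 < x) M) z) = count M (Suc y)"
  proof (cases "Suc y \<in># M")
    case True
    then have "{Suc y} \<inter> set_mset M = {Suc y}" by auto
    then show ?thesis by simp
  next
    case False
    then have "{Suc y} \<inter> set_mset M = {}" by auto
    then show ?thesis using False by (simp add: not_in_iff)
  qed
  finally show ?thesis .
qed

lemma cf_shift: "cf p M \<Longrightarrow> cf p (shift M)"
  by (simp add: cf_def count_shift)

lemma cf_mod: "cf p M \<Longrightarrow> val p M mod p = count M 0"
proof -
  assume "cf p M"
  then have "count M 0 < p" by (simp add: cf_def)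
  then show ?thesis using val_decomp[of p M] by simp
qed

lemma cf_unique:
  assumes "p > 1" shows "cf p M \<Longrightarrow> cf p N \<Longrightarrow> val p M = val p N \<Longrightarrow> M = N"
proof (induct "val p M" arbitrary: M N rule: less_induct)
  case less
  show ?case
  proof (cases "val p M = 0")
    case True
    then have "size M = 0" "size N = 0" using val_ge_size[of p M] val_ge_size[of p N] less(4) assms by auto
    then show ?thesis by simp
  next
    case False
    have c0: "count M 0 = count N 0" using cf_mod[OF less(2)] cf_mod[OF less(3)] less(4) by simp
    have dM: "val p M = count M 0 + p * val p (shift M)" by (rule val_decomp)
    have dN: "val p N = count N 0 + p * val p (shift N)" by (rule val_decomp)
    have vs: "val p (shift M) = val p (shift N)"
      using dM dN less(4) c0 assms by simp
    have "val p (shift M) < val p M"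
    proof (cases "val p (shift M) = 0")
      case True then show ?thesis using False by simp
    next
      case F2: False
      then have "val p (shift M) < p * val p (shift M)" using assms by simp
      then show ?thesis using dM by linarith
    qed
    then have "shift M = shift N" using less(1)[OF _ cf_shift[OF less(2)] cf_shift[OF less(3)] vs] by simp
    then have cs: "count M (Suc y) = count N (Suc y)" for y
      using count_shift[of M y] count_shift[of N y] by simp
    have "count M y = count N y" for y
      using c0 cs by (cases y) auto
    then show ?thesis by (simp add: multiset_eqI)
  qed
qed

lemma carry_val:
  assumes "count M x \<ge> p" shows "val p (carry p x M) = val p M"
proof -
  have "replicate_mset p x \<subseteq># M" using assms by (simp add: subseteq_mset_def)
  then have M: "M = (M - replicate_mset p x) + replicate_mset p x" by simp
  have "val p M = val p (M - replicate_mset p x) + p * p ^ x" by (subst M, simp)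
  then show ?thesis by (simp add: carry_def)
qed

lemma carry_size:
  assumes "count M x \<ge> p" shows "size (carry p x M) + p = size M + 1"
proof -
  have "replicate_mset p x \<subseteq># M" using assms by (simp add: subseteq_mset_def)
  then have "size M = size (M - replicate_mset p x) + p"
    by (metis add.commute size_replicate_mset size_union subset_mset.diff_add)
  then show ?thesis by (simp add: carry_def)
qed

lemma count_carry: "count M x \<ge> p \<Longrightarrow> count (carry p x M) y = count M y - (if y = x then p else 0) + (if y = Suc x then 1 else 0)"
  by (simp add: carry_def)

lemma F3:
  assumes "p > 1" shows "cf p N \<Longrightarrow> val p M = val p N \<Longrightarrow> size N \<le> size M"
proof (induct "size M" arbitrary: M rule: less_induct)
  case less
  show ?case
  proof (cases "cf p M")
    case True then show ?thesis using cf_unique[OF assms True less(2)] less by simp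
  next
    case False
    then obtain x where x: "count M x \<ge> p" by (auto simp: cf_def not_less)
    have "size (carry p x M) < size M" using carry_size[OF x] assms by simp
    moreover have "val p (carry p x M) = val p N" using carry_val[OF x] less by simp
    ultimately have "size N \<le> size (carry p x M)" using less by blast
    then show ?thesis using carry_size[OF x] assms by simp
  qed
qed

lemma nocarry:
  assumes "p > 1" "size L = size R" "val p L = val p R" "cf p R"
  shows "L = R"
proof (cases "cf p L")
  case True then show ?thesis using cf_unique assms by blast
next
  case False
  then obtain x where x: "count L x \<ge> p" by (auto simp: cf_def not_less)
  have "size R \<le> size (carry p x L)" using F3[OF assms(1) assms(4)] carry_val[OF x] assms by simp
  then show ?thesis using carry_size[OF x] assms by simp
qed

lemma onecarry:
  assumes "p > 1" "size L = size R" "val p L = val p R" "count R y \<ge> p" "cf p (carry p y R)"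
  shows "\<exists>x. count L x \<ge> p \<and> carry p x L = carry p y R"
proof -
  let ?R = "carry p y R"
  have vR: "val p ?R = val p L" using carry_val[OF assms(4)] assms by simp
  have sR: "size ?R + p = size L + 1" using carry_size[OF assms(4)] assms by simp
  have "\<not> cf p L"
  proof
    assume "cf p L" then have "L = ?R" using cf_unique[OF assms(1)] assms(5) vR by metis
    then show False using sR assms by simp
  qed
  then obtain x where x: "count L x \<ge> p" by (auto simp: cf_def not_less)
  let ?L = "carry p x L"
  have vL: "val p ?L = val p ?R" using carry_val[OF x] vR by simp
  have sL: "size ?L = size ?R" using carry_size[OF x] sR by simp
  have "?L = ?R" using nocarry[OF assms(1) sL vL assms(5)] .
  then show ?thesis using x by blast
qed

lemma carry_inv: "count L x \<ge> p \<Longrightarrow> carry p x L = Q \<Longrightarrow> L = replicate_mset p x + (Q - {#Suc x#})"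
proof -
  assume a: "count L x \<ge> p" "carry p x L = Q"
  have "replicate_mset p x \<subseteq># L" using a by (simp add: subseteq_mset_def)
  have "Q = add_mset (Suc x) (L - replicate_mset p x)" using a(2) unfolding carry_def by simp
  then have "Q - {#Suc x#} = L - replicate_mset p x" by simp
  then show ?thesis using \<open>replicate_mset p x \<subseteq># L\<close>
    by (metis subset_mset.add_diff_inverse)
qed

lemma blockH: "p \<ge> 1 \<Longrightarrow> sum_mset (image_mset (\<lambda>(i,j). 2 * (p^i - 1) * p^j) P) + 2 * val p (image_mset snd P)
   = 2 * val p (image_mset (\<lambda>(i,j). i + j) P)"
proof (induct P)
  case (add x P)
  obtain i j where x: "x = (i,j)" by force
  have "1 \<le> p ^ i" using add by simp
  then obtain k where k: "p ^ i = Suc k" by (cases "p ^ i") auto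
  have "2 * (p^i - 1) * p^j + 2 * p ^ j = 2 * p ^ (i + j)"
    by (simp add: power_add k)
  then show ?case using add x by (simp add: algebra_simps)
qed simp

lemma blockB: "p \<ge> 1 \<Longrightarrow> sum_mset (image_mset (\<lambda>(i,j). 2 * (p^i - 1) * p^(j+1)) P) + 2 * val p (image_mset (\<lambda>(i,j). Suc j) P)
   = 2 * val p (image_mset (\<lambda>(i,j). Suc (i + j)) P)"
proof (induct P)
  case (add x P)
  obtain i j where x: "x = (i,j)" by force
  have "1 \<le> p ^ i" using add by simp
  then obtain k where k: "p ^ i = Suc k" by (cases "p ^ i") auto
  have "2 * (p^i - 1) * p^(j+1) + 2 * p ^ (Suc j) = 2 * p ^ (Suc (i + j))"
    by (simp add: power_add k algebra_simps)
  then show ?case using add x by (simp add: algebra_simps)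
qed simp

lemma blockA: "p \<ge> 1 \<Longrightarrow> sum_mset (image_mset (\<lambda>k. 2 * p^k - 1) A) + size A = 2 * val p A"
proof (induct A)
  case (add x A)
  have "1 \<le> p ^ x" using add by simp
  then obtain k where k: "p ^ x = Suc k" by (cases "p ^ x") auto
  have "sum_mset (image_mset (\<lambda>k. 2 * p^k - 1) A) + size A = 2 * val p A" using add by simp
  then show ?case using k by simp
qed simp

definition Sst :: "(nat\<times>nat) set \<Rightarrow> (nat\<times>nat) multiset \<Rightarrow> nat multiset" where
  "Sst H B = image_mset snd (mset_set H) + image_mset (\<lambda>(i,j). Suc j) B"
definition End :: "(nat\<times>nat) set \<Rightarrow> (nat\<times>nat) multiset \<Rightarrow> nat multiset" where
  "End H B = image_mset (\<lambda>(i,j). i + j) (mset_set H) + image_mset (\<lambda>(i,j). Suc (i + j)) B"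

lemma deg_identity:
  assumes "p \<ge> 1" "finite H"
  shows "t_deg p (H,B,A) + 2 * val p (Sst H B) + size A = 2 * val p (End H B) + 2 * val p A"
proof -
  have h: "t_deg p (H,B,A) = sum_mset (image_mset (\<lambda>(i,j). 2 * (p^i - 1) * p^j) (mset_set H))
     + sum_mset (image_mset (\<lambda>(i,j). 2 * (p^i - 1) * p^(j+1)) B)
     + sum_mset (image_mset (\<lambda>k. 2 * p^k - 1) A)"
    unfolding t_deg_def by (simp add: sum_unfold_sum_mset)
  have v1: "val p (Sst H B) = val p (image_mset snd (mset_set H)) + val p (image_mset (\<lambda>(i,j). Suc j) B)"
    unfolding Sst_def by simp
  have v2: "val p (End H B) = val p (image_mset (\<lambda>(i,j). i + j) (mset_set H)) + val p (image_mset (\<lambda>(i,j). Suc (i + j)) B)"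
    unfolding End_def by simp
  show ?thesis
    using blockH[OF assms(1), of "mset_set H"] blockB[OF assms(1), of B] blockA[OF assms(1), of A] h v1 v2
    by linarith
qed

definition G :: "nat \<Rightarrow> nat multiset \<Rightarrow> nat" where
  "G p M = sum_mset (image_mset (\<lambda>x. \<Sum>t<x. p^t) M)"

lemma pow_geom: "(p::nat) \<ge> 1 \<Longrightarrow> p ^ x = 1 + (p - 1) * (\<Sum>t<x. p^t)"
proof (induct x)
  case (Suc x)
  have "p ^ Suc x = p * p ^ x" by simp
  also have "\<dots> = p ^ x + (p - 1) * p ^ x"
  proof -
    obtain p0 where "p = Suc p0" using Suc(2) by (cases p) auto
    then show ?thesis by simp
  qed
  also have "\<dots> = 1 + (p - 1) * (\<Sum>t<x. p^t) + (p - 1) * p ^ x" using Suc by simp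
  also have "\<dots> = 1 + (p - 1) * (\<Sum>t<Suc x. p^t)" by (simp add: distrib_left)
  finally show ?case .
qed simp

lemma val_G: "p \<ge> 1 \<Longrightarrow> val p M = size M + (p - 1) * G p M"
proof (induct M)
  case (add x M)
  have "val p (add_mset x M) = p ^ x + val p M" by simp
  also have "\<dots> = 1 + (p - 1) * (\<Sum>t<x. p^t) + (size M + (p - 1) * G p M)" using pow_geom[OF add(2), of x] add by simp
  also have "\<dots> = size (add_mset x M) + (p - 1) * G p (add_mset x M)" by (simp add: G_def distrib_left)
  finally show ?case .
qed (simp add: G_def)

lemma size_Sst: "finite H \<Longrightarrow> size (Sst H B) = card H + size B" by (simp add: Sst_def)
lemma size_End: "finite H \<Longrightarrow> size (End H B) = card H + size B" by (simp add: End_def)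

lemma degrees:
  fixes p m n s r :: nat and H B A
  assumes p5: "p \<ge> 5" and "2 \<le> s" "s < p" "1 \<le> r" "r \<le> s + 3"
    and fin: "finite H"
    and sd: "card H + 2 * size B + size A = s + 3 - r"
    and td: "t_deg p (H,B,A) = 2*(p-1) * (p^n + p^m + s*p + s) + s - r - 1"
  shows "size A + r + 1 = s \<and> card H + 2 * size B = 4 \<and>
     val p (A + End H B + {#n, m#} + replicate_mset (Suc r) 0) =
     val p ({#Suc n, Suc m#} + replicate_mset s 2 + Sst H B)"
proof -
  obtain p0 where p0: "p = Suc p0" using p5 by (cases p) auto
  define X where "X = p^n + p^m + s*p + s"
  define q where "q = 2 * p0"
  have pm1: "p - 1 = p0" using p0 by simp
  have Xbig: "X \<ge> s" unfolding X_def by simp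
  have q8: "q \<ge> 8" using p5 p0 unfolding q_def by simp
  have "q * X \<ge> 8 * s" using q8 Xbig by (simp add: mult_le_mono)
  then have qX: "q * X \<ge> r + 1" using assms(2,5) by linarith
  have e1: "t_deg p (H,B,A) + r + 1 = q * X + s" using td qX unfolding q_def X_def pm1 by simp
  have di: "t_deg p (H,B,A) + 2 * val p (Sst H B) + size A = 2 * val p (End H B) + 2 * val p A"
    using deg_identity[OF _ fin] p5 by simp
  have vS: "val p (Sst H B) = size (Sst H B) + p0 * G p (Sst H B)" using val_G[of p] p5 pm1 by simp
  have vE: "val p (End H B) = size (End H B) + p0 * G p (End H B)" using val_G[of p] p5 pm1 by simp
  have vA: "val p A = size A + p0 * G p A" using val_G[of p] p5 pm1 by simp
  have sz: "size (Sst H B) = size (End H B)" using size_Sst size_End fin by simp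
  have main: "q * (X + G p (Sst H B)) + s = q * (G p (End H B) + G p A) + (size A + r + 1)"
  proof -
    have "q * X + s + 2 * val p (Sst H B) + size A = 2 * val p (End H B) + 2 * val p A + r + 1"
      using e1 di by linarith
    then have "q * X + s + 2 * size (Sst H B) + q * G p (Sst H B) + size A
       = 2 * size (End H B) + q * G p (End H B) + 2 * size A + q * G p A + r + 1"
      using vS vE vA unfolding q_def by (simp add: algebra_simps)
    then show ?thesis using sz by (simp add: algebra_simps)
  qed
  have Ale: "size A \<le> s + 3 - r" using sd by simp
  have qge: "q \<ge> s + 4" using p5 assms(3) p0 unfolding q_def by simp
  have cle: "size A + r + 1 \<le> q" using Ale qge assms(5) by simp
  have smod: "(q * (X + G p (Sst H B)) + s) mod q = s" using qge by simp
  have "size A + r + 1 = s"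
  proof (cases "size A + r + 1 = q")
    case True
    then have "(q * (G p (End H B) + G p A) + (size A + r + 1)) mod q = 0" by simp
    then show ?thesis using smod main assms(2) by simp
  next
    case False
    then have "(q * (G p (End H B) + G p A) + (size A + r + 1)) mod q = size A + r + 1" using cle by simp
    then show ?thesis using smod main by simp
  qed
  then have c: "size A + r + 1 = s" .
  then have K: "X + G p (Sst H B) = G p (End H B) + G p A" using main qge by simp
  have h4: "card H + 2 * size B = 4" using sd c by simp
  have "val p (A + End H B + {#n, m#} + replicate_mset (Suc r) 0)
      = size A + size (Sst H B) + p0 * (X + G p (Sst H B)) + p^n + p^m + (r + 1)"
    using vE vA sz K by (simp add: algebra_simps)
  also have "\<dots> = s + val p (Sst H B) + p0 * X + p^n + p^m"
    using vS c by (simp add: algebra_simps)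
  also have "\<dots> = val p ({#Suc n, Suc m#} + replicate_mset s 2 + Sst H B)"
    unfolding X_def p0 by (simp add: algebra_simps power2_eq_square)
  finally show ?thesis using c h4 by simp
qed

lemma count2_le: "y \<noteq> z \<Longrightarrow> count M y + count M z \<le> size M"
proof -
  assume yz: "y \<noteq> z"
  have "replicate_mset (count M y) y + replicate_mset (count M z) z \<subseteq># M"
    using yz by (auto simp: subseteq_mset_def)
  from size_mset_mono[OF this] show ?thesis by simp
qed

lemma sub_size_eq: "N \<subseteq># M \<Longrightarrow> size M \<le> size N \<Longrightarrow> N = M"
  using mset_subset_size subset_mset.le_less by fastforce

lemma img4: "image_mset snd P = {#w, x, y, z#} \<Longrightarrow> \<exists>a b c d. P = {#(a,w),(b,x),(c,y),(d,z)#}"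
proof -
  assume h: "image_mset snd P = {#w, x, y, z#}"
  obtain P1 e1 where 1: "P = add_mset e1 P1" "snd e1 = w" "image_mset snd P1 = {#x, y, z#}"
    using msed_map_invR[of snd P w "{#x, y, z#}"] h by auto
  obtain P2 e2 where 2: "P1 = add_mset e2 P2" "snd e2 = x" "image_mset snd P2 = {#y, z#}"
    using msed_map_invR[of snd P1 x "{#y, z#}"] 1 by auto
  obtain P3 e3 where 3: "P2 = add_mset e3 P3" "snd e3 = y" "image_mset snd P3 = {#z#}"
    using msed_map_invR[of snd P2 y "{#z#}"] 2 by auto
  obtain P4 e4 where 4: "P3 = add_mset e4 P4" "snd e4 = z" "image_mset snd P4 = {#}"
    using msed_map_invR[of snd P3 z "{#}"] 3 by auto
  have "P4 = {#}" using 4 by simp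
  then have "P = {#(fst e1, w), (fst e2, x), (fst e3, y), (fst e4, z)#}"
    using 1 2 3 4 by (metis prod.collapse)
  then show ?thesis by blast
qed

lemma val_mod_count: "val p M mod p = count M 0 mod p"
  using val_decomp[of p M] by simp

lemma getH:
  assumes fin: "finite H" and h4: "card H + 2 * size B = 4"
    and sub: "{#0, 0, y, z#} \<subseteq># Sst H B"
  shows "B = {#} \<and> card H = 4 \<and> Sst H B = {#0, 0, y, z#} \<and>
         (\<exists>a b c d. mset_set H = {#(a,0),(b,0),(c,y),(d,z)#})"
proof -
  have "size {#0::nat, 0, y, z#} \<le> size (Sst H B)" by (rule size_mset_mono[OF sub])
  then have "4 \<le> card H + size B" using size_Sst[OF fin] by simp
  then have B: "size B = 0" using h4 by linarith
  then have B': "B = {#}" by simp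
  have sz: "size (Sst H B) = 4" using size_Sst[OF fin] h4 B by simp
  have S: "Sst H B = {#0, 0, y, z#}"
    using sub_size_eq[OF sub] sz by simp
  then have "image_mset snd (mset_set H) = {#0, 0, y, z#}" using B' by (simp add: Sst_def)
  from img4[OF this] show ?thesis using B' S h4 by simp
qed

lemma mset_set_H:
  assumes "mset_set H = {#(a,0),(b,0),(c,y),(d,z)#}" "finite H"
  shows "H = {(a,0),(b,0),(c,y),(d,z)}" "a \<noteq> b"
proof -
  have "set_mset (mset_set H) = H" using assms(2) by simp
  then show "H = {(a,0),(b,0),(c,y),(d,z)}" using assms(1) by simp
  show "a \<noteq> b"
  proof
    assume "a = b"
    then have "count (mset_set H) (a,0) \<ge> 2" using assms(1) by simp
    then show False using count_mset_set'[of H "(a,0)"] by (simp split: if_splits)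
  qed
qed

lemma carry_eq_count:
  assumes "count L x \<ge> p" "count R y \<ge> p" "carry p x L = carry p y R"
  shows "count L v + (if v = Suc x then 1 else 0) + (if v = y then p else 0)
       = count R v + (if v = Suc y then 1 else 0) + (if v = x then p else 0)"
proof -
  have "count (carry p x L) v = count (carry p y R) v" using assms(3) by simp
  then show ?thesis using count_carry[OF assms(1), of v] count_carry[OF assms(2), of v] assms(1,2)
    by (auto split: if_splits)
qed

lemma classify:
  fixes p m n s r :: nat and H B A
  assumes p5: "p \<ge> 5" and m4: "m \<ge> 4" and nm: "n \<ge> m + 2" and s2: "2 \<le> s" and sp: "s < p"
    and r1: "1 \<le> r" and fin: "finite H" and hpos: "\<forall>(i,j)\<in>H. i > 0"
    and sA: "size A + r + 1 = s" and h4: "card H + 2 * size B = 4"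
    and V: "val p (A + End H B + {#n, m#} + replicate_mset (Suc r) 0) =
            val p ({#Suc n, Suc m#} + replicate_mset s 2 + Sst H B)"
  shows "r = 1 \<and> s = p - 1 \<and> (H,B,A) \<in> {g1 p m n, g2 p m n, g3 p m n, g4 p m n, g5 p m n, g6 p m n, g7 p m n}"
proof -
  define S where "S = Sst H B"
  define E where "E = End H B"
  define L where "L = A + E + {#n, m#} + replicate_mset (Suc r) 0"
  define R where "R = {#Suc n, Suc m#} + replicate_mset s 2 + S"
  have V': "val p L = val p R" using V unfolding L_def R_def S_def E_def .
  have p1: "p > 1" using p5 by simp
  have szSE: "size S = size E" "size S = card H + size B"
    unfolding S_def E_def using size_Sst[OF fin] size_End[OF fin] by simp_all
  have szS4: "size S \<le> 4" using szSE h4 by simp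
  have szLR: "size L = size R" unfolding L_def R_def using szSE sA by simp
  have E0: "count E 0 = 0"
  proof -
    have "0 \<notin># E" using hpos fin unfolding E_def End_def by auto
    then show ?thesis by (simp add: not_in_iff)
  qed
  have cL0: "count L 0 = count A 0 + r + 1" unfolding L_def using E0 m4 nm by simp
  have cR0: "count R 0 = count S 0" unfolding R_def by simp
  have cA0: "count A 0 \<le> size A" by (simp add: count_le_size)
  have "count L 0 mod p = count R 0 mod p" using val_mod_count[of p L] val_mod_count[of p R] V' by simp
  moreover have "count L 0 < p" using cL0 cA0 sA sp by simp
  moreover have "count R 0 < p" using cR0 count_le_size[of S 0] szS4 p5 by simp
  ultimately have c0: "count S 0 = count A 0 + r + 1" using cL0 cR0 by simp
  have c0ge: "count S 0 \<ge> 2" using c0 r1 by simp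
  have cSy: "count S y \<le> 2" if "y \<noteq> 0" for y
    using count2_le[of y 0 S] that szS4 c0ge by simp
  have nm_ne: "n \<noteq> m" "Suc n \<noteq> Suc m" "n \<noteq> Suc m" "m \<noteq> Suc n" "n \<noteq> Suc n" "m \<noteq> Suc m"
    using nm by simp_all
  have neqs: "n \<noteq> 0" "m \<noteq> 0" "n \<noteq> 2" "m \<noteq> 2" "n \<noteq> 3" "m \<noteq> 3" "n \<noteq> 1" "m \<noteq> 1"
    "Suc n \<noteq> 0" "Suc m \<noteq> 0" "Suc n \<noteq> 2" "Suc m \<noteq> 2" "Suc n \<noteq> 3" "Suc m \<noteq> 3"
    "Suc m \<noteq> n" "Suc n \<noteq> m" "n \<noteq> m" "Suc n \<noteq> n" "Suc m \<noteq> m" "Suc n \<noteq> Suc m"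
    using nm m4 by simp_all
  have cR: "count R y = (if y = Suc n then 1 else 0) + (if y = Suc m then 1 else 0) + (if y = 2 then s else 0) + count S y" for y
    unfolding R_def using nm_ne by simp
  have cRle: "count R y < p" if "y \<noteq> 2" for y
  proof (cases "y = 0")
    case True then show ?thesis using cR0 count_le_size[of S 0] szS4 p5 by simp
  next
    case False
    then have "count S y \<le> 2" by (rule cSy)
    then show ?thesis using cR[of y] that nm_ne p5 by (auto split: if_splits)
  qed
  show ?thesis
  proof (cases "count R 2 < p")
    case True
    have cfR: "cf p R" unfolding cf_def using cRle True by (metis)
    have LR: "L = R" using nocarry[OF p1 szLR V' cfR] .
    have cL: "count L v = count A v + count E v + (if v = n then 1 else 0) + (if v = m then 1 else 0) + (if v = 0 then Suc r else 0)" for v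
      unfolding L_def using nm_ne by simp
    have eqv: "count A v + count E v + (if v = n then 1 else 0) + (if v = m then 1 else 0) + (if v = 0 then Suc r else 0)
      = (if v = Suc n then 1 else 0) + (if v = Suc m then 1 else 0) + (if v = 2 then s else 0) + count S v" for v
      using cL[of v] cR[of v] LR by simp
    have "count S n = Suc (count A n + count E n)" using eqv[of n] nm m4 by simp
    then have "count S n \<ge> 1" by linarith
    moreover have "count S m = Suc (count A m + count E m)" using eqv[of m] nm m4 by simp
    then have "count S m \<ge> 1" by linarith
    ultimately have sub: "{#0, 0, m, n#} \<subseteq># S" using c0ge nm m4
      unfolding subseteq_mset_def by auto
    obtain a b c d where B0: "B = {#}" and SS: "S = {#0, 0, m, n#}"
      and MH: "mset_set H = {#(a,0),(b,0),(c,m),(d,n)#}"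
      using getH[OF fin h4 sub[unfolded S_def]] unfolding S_def by blast
    have HH: "H = {(a,0),(b,0),(c,m),(d,n)}" and ab: "a \<noteq> b" using mset_set_H[OF MH fin] by auto
    have pos: "a > 0" "b > 0" "c > 0" "d > 0" using hpos HH by auto
    have EE: "E = {#a, b, c + m, d + n#}" unfolding E_def End_def using MH B0 by simp
    have "count S 0 = 2" using SS m4 nm by simp
    then have rr: "r = 1" using c0 r1 by simp
    have cS: "count S v = (if v = 0 then 2 else 0) + (if v = m then 1 else 0) + (if v = n then 1 else 0)" for v
      using SS m4 nm by auto
    have cE: "count E v = (if v = a then 1 else 0) + (if v = b then 1 else 0) + (if v = c + m then 1 else 0) + (if v = d + n then 1 else 0)" for v
      unfolding EE by auto
    have d1: "d + n = Suc n"
    proof (rule ccontr)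
      assume "d + n \<noteq> Suc n"
      then show False using eqv[of "d + n"] cE[of "d+n"] cS[of "d+n"] pos nm m4 by (auto split: if_splits)
    qed
    have cm: "c + m = Suc m"
    proof (rule ccontr)
      assume "c + m \<noteq> Suc m"
      then show False using eqv[of "c + m"] cE[of "c+m"] cS[of "c+m"] pos nm m4 d1 by (auto split: if_splits)
    qed
    have "a = 2" using eqv[of a] cE[of a] cS[of a] pos nm m4 d1 cm by (auto split: if_splits)
    moreover have "b = 2" using eqv[of b] cE[of b] cS[of b] pos nm m4 d1 cm by (auto split: if_splits)
    ultimately show ?thesis using ab by simp
  next
    case False
    have cR2: "count R 2 = s + count S 2" using cR[of 2] nm_ne nm m4 by simp
    have cS2: "count S 2 \<ge> 1" using False cR2 sp by linarith
    have cS2le: "count S 2 \<le> 2" using cSy[of 2] by simp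
    have cfR: "cf p (carry p 2 R)" unfolding cf_def
    proof
      fix y
      have Rp: "p \<le> count R 2" using False by simp
      show "count (carry p 2 R) y < p"
      proof (cases "y = 2")
        case True then show ?thesis using count_carry[OF Rp, of y] cR2 cS2le sp p5 by simp
      next
        case F: False
        show ?thesis
        proof (cases "y = 3")
          case True
          have "count R 3 = count S 3" using cR[of 3] nm m4 by simp
          then show ?thesis using True count_carry[OF Rp, of y] cSy[of 3] p5 by simp
        next
          case False
          then show ?thesis using F count_carry[OF Rp, of y] cRle[OF F] by simp
        qed
      qed
    qed
    obtain x where cx: "count L x \<ge> p" and CL: "carry p x L = carry p 2 R"
      using onecarry[OF p1 szLR V' _ cfR] False by auto
    have ceq: "count L v + (if v = Suc x then 1 else 0) + (if v = 2 then p else 0)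
       = count R v + (if v = 3 then 1 else 0) + (if v = x then p else 0)" for v
      using carry_eq_count[OF cx _ CL, of v] False by simp
    have cL: "count L v = count A v + count E v + (if v = n then 1 else 0) + (if v = m then 1 else 0) + (if v = 0 then Suc r else 0)" for v
      unfolding L_def using nm_ne by simp
    have cL0p: "count L 0 < p" using cL0 cA0 sA sp by simp
    have x0: "x \<noteq> 0"
    proof
      assume "x = 0" then show False using cx cL0p by simp
    qed
    have xn: "count S n \<ge> 1" if "x \<noteq> n"
    proof -
      have "count L n \<ge> 1" using cL[of n] by simp
      moreover have "count L n + (if n = Suc x then 1 else 0) = count S n"
        using ceq[of n] cR[of n] that nm m4 nm_ne by simp
      ultimately show ?thesis by linarith
    qed
    have xm: "count S m \<ge> 1" if "x \<noteq> m"
    proof -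
      have "count L m \<ge> 1" using cL[of m] by simp
      moreover have "count L m + (if m = Suc x then 1 else 0) = count S m"
        using ceq[of m] cR[of m] that nm m4 nm_ne by simp
      ultimately show ?thesis by linarith
    qed
    consider "x = n" | "x = m" | "x \<noteq> n \<and> x \<noteq> m" by blast
    then show ?thesis
    proof cases
      case 3
      have "{#0, 0, 2, m, n#} \<subseteq># S" using c0ge cS2 xn xm 3 nm m4
        unfolding subseteq_mset_def by auto
      from size_mset_mono[OF this] szS4 show ?thesis by simp
    next
      case 2
      have sub: "{#0, 0, 2, n#} \<subseteq># S" using c0ge cS2 xn 2 nm m4
        unfolding subseteq_mset_def by auto
      obtain a b c d where B0: "B = {#}" and SS: "S = {#0, 0, 2, n#}"
        and MH: "mset_set H = {#(a,0),(b,0),(c,2),(d,n)#}"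
        using getH[OF fin h4 sub[unfolded S_def]] unfolding S_def by blast
      have HH: "H = {(a,0),(b,0),(c,2),(d,n)}" and ab: "a \<noteq> b" using mset_set_H[OF MH fin] by auto
      have pos: "a > 0" "b > 0" "c > 0" "d > 0" using hpos HH by auto
      have EE: "E = {#a, b, c + 2, d + n#}" unfolding E_def End_def using MH B0 by simp
      have "count S 0 = 2" using SS m4 nm by simp
      then have rr: "r = 1" using c0 r1 by simp
      have "count S 2 = 1" using SS m4 nm by simp
      then have ss: "s = p - 1" using False cR2 sp by simp
      have cS: "count S v = (if v = 0 then 2 else 0) + (if v = 2 then 1 else 0) + (if v = n then 1 else 0)" for v
        using SS m4 nm by auto
      have cE: "count E v = (if v = a then 1 else 0) + (if v = b then 1 else 0) + (if v = c + 2 then 1 else 0) + (if v = d + n then 1 else 0)" for v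
        unfolding EE by auto
      have eqv: "count A v + count E v + (if v = n then 1 else 0) + (if v = m then 1 else 0) + (if v = 0 then 2 else 0)
          + (if v = Suc m then 1 else 0) + (if v = 2 then p else 0)
        = (if v = Suc n then 1 else 0) + (if v = Suc m then 1 else 0) + (if v = 2 then p - 1 else 0) + count S v
          + (if v = 3 then 1 else 0) + (if v = m then p else 0)" for v
      proof -
        have l: "count L v = count A v + count E v + (if v = n then 1 else 0) + (if v = m then 1 else 0) + (if v = 0 then 2 else 0)"
          using cL[of v] rr by simp
        have r: "count R v = (if v = Suc n then 1 else 0) + (if v = Suc m then 1 else 0) + (if v = 2 then p - 1 else 0) + count S v"
          using cR[of v] ss by simp
        show ?thesis using ceq[of v, unfolded 2] l r by linarith
      qed
      have z: "count A v + count E v = 0" if "v \<noteq> 3" "v \<noteq> m" "v \<noteq> Suc n" for v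
      proof -
        consider "v = n" | "v = Suc m" | "v = 2" | "v = 0" | "v \<noteq> n \<and> v \<noteq> Suc m \<and> v \<noteq> 2 \<and> v \<noteq> 0" by blast
        then show ?thesis
        proof cases
          case 1 then show ?thesis using eqv[of v] cS[of v] neqs by simp
        next
          case 2 then show ?thesis using eqv[of v] cS[of v] neqs by simp
        next
          case 3 then show ?thesis using eqv[of v] cS[of v] neqs p5 by simp
        next
          case 4 then show ?thesis using eqv[of v] cS[of v] neqs by simp
        next
          case 5 then show ?thesis using eqv[of v] cS[of v] neqs that by simp
        qed
      qed
      have E3: "count A 3 + count E 3 = 1" using eqv[of 3] cS[of 3] neqs by simp
      have ESn: "count A (Suc n) + count E (Suc n) = 1" using eqv[of "Suc n"] cS[of "Suc n"] neqs by simp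
      have Em: "count A m + count E m + 1 = p" using eqv[of m] cS[of m] neqs by simp
      have inE: "v = 3 \<or> v = m \<or> v = Suc n" if "count E v \<ge> 1" for v
        using z[of v] that by linarith
      have d1: "d + n = Suc n"
      proof -
        have "count E (d + n) \<ge> 1" using cE[of "d+n"] by simp
        from inE[OF this] show ?thesis using pos nm m4 by auto
      qed
      have aV: "a = 3 \<or> a = m \<or> a = Suc n"
      proof -
        have "count E a \<ge> 1" using cE[of a] by simp
        from inE[OF this] show ?thesis .
      qed
      have bV: "b = 3 \<or> b = m \<or> b = Suc n"
      proof -
        have "count E b \<ge> 1" using cE[of b] by simp
        from inE[OF this] show ?thesis .
      qed
      have cV: "c + 2 = 3 \<or> c + 2 = m \<or> c + 2 = Suc n"
      proof -
        have "count E (c + 2) \<ge> 1" using cE[of "c+2"] by simp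
        from inE[OF this] show ?thesis .
      qed
      have cESn: "count E (Suc n) \<le> 1" using ESn by simp
      have "a \<noteq> Suc n" using cESn cE[of "Suc n"] d1 by (auto split: if_splits)
      moreover have "b \<noteq> Suc n" using cESn cE[of "Suc n"] d1 by (auto split: if_splits)
      moreover have c2n: "c + 2 \<noteq> Suc n" using cESn cE[of "Suc n"] d1 by (auto split: if_splits)
      ultimately have ab2: "(a = 3 \<and> b = m) \<or> (a = m \<and> b = 3)" using aV bV ab by auto
      have cE3: "count E 3 \<le> 1" using E3 by simp
      have c2: "c + 2 = m"
      proof (rule ccontr)
        assume "c + 2 \<noteq> m"
        then have "c + 2 = 3" using cV c2n by simp
        then show False using cE3 cE[of 3] ab2 neqs d1 by auto
      qed
      have cEm: "count E m = 2" using cE[of m] ab2 c2 d1 neqs by auto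
      have cE3': "count E 3 = 1" using cE[of 3] ab2 c2 d1 neqs by auto
      have AA: "A = replicate_mset (p - 3) m"
      proof (rule multiset_eqI)
        fix v
        show "count A v = count (replicate_mset (p - 3) m) v"
        proof (cases "v = 3 \<or> v = m \<or> v = Suc n")
          case True
          then show ?thesis using Em cEm E3 cE3' ESn cESn cE[of "Suc n"] d1 neqs by auto
        next
          case False then show ?thesis using z[of v] by auto
        qed
      qed
      have H7: "H = {(3,0),(m,0),(m-2,2),(1,n)}"
      proof -
        have "c = m - 2" "d = 1" using c2 d1 by auto
        then show ?thesis using HH ab2 by auto
      qed
      have "(H,B,A) = g7 p m n" unfolding g7_def using H7 B0 AA by simp
      then show ?thesis using rr ss by simp
    next
      case 1
      have sub: "{#0, 0, 2, m#} \<subseteq># S" using c0ge cS2 xm 1 nm m4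
        unfolding subseteq_mset_def by auto
      obtain a b c d where B0: "B = {#}" and SS: "S = {#0, 0, 2, m#}"
        and MH: "mset_set H = {#(a,0),(b,0),(c,2),(d,m)#}"
        using getH[OF fin h4 sub[unfolded S_def]] unfolding S_def by blast
      have HH: "H = {(a,0),(b,0),(c,2),(d,m)}" and ab: "a \<noteq> b" using mset_set_H[OF MH fin] by auto
      have pos: "a > 0" "b > 0" "c > 0" "d > 0" using hpos HH by auto
      have EE: "E = {#a, b, c + 2, d + m#}" unfolding E_def End_def using MH B0 by simp
      have "count S 0 = 2" using SS m4 nm by simp
      then have rr: "r = 1" using c0 r1 by simp
      have "count S 2 = 1" using SS m4 nm by simp
      then have ss: "s = p - 1" using False cR2 sp by simp
      have cS: "count S v = (if v = 0 then 2 else 0) + (if v = 2 then 1 else 0) + (if v = m then 1 else 0)" for v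
        using SS m4 nm by auto
      have cE: "count E v = (if v = a then 1 else 0) + (if v = b then 1 else 0) + (if v = c + 2 then 1 else 0) + (if v = d + m then 1 else 0)" for v
        unfolding EE by auto
      have eqv: "count A v + count E v + (if v = n then 1 else 0) + (if v = m then 1 else 0) + (if v = 0 then 2 else 0)
          + (if v = Suc n then 1 else 0) + (if v = 2 then p else 0)
        = (if v = Suc n then 1 else 0) + (if v = Suc m then 1 else 0) + (if v = 2 then p - 1 else 0) + count S v
          + (if v = 3 then 1 else 0) + (if v = n then p else 0)" for v
      proof -
        have l: "count L v = count A v + count E v + (if v = n then 1 else 0) + (if v = m then 1 else 0) + (if v = 0 then 2 else 0)"
          using cL[of v] rr by simp
        have r: "count R v = (if v = Suc n then 1 else 0) + (if v = Suc m then 1 else 0) + (if v = 2 then p - 1 else 0) + count S v"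
          using cR[of v] ss by simp
        show ?thesis using ceq[of v, unfolded 1] l r by linarith
      qed
      have z: "count A v + count E v = 0" if "v \<noteq> 3" "v \<noteq> Suc m" "v \<noteq> n" for v
      proof -
        consider "v = m" | "v = Suc n" | "v = 2" | "v = 0" | "v \<noteq> m \<and> v \<noteq> Suc n \<and> v \<noteq> 2 \<and> v \<noteq> 0" by blast
        then show ?thesis
        proof cases
          case 1 then show ?thesis using eqv[of v] cS[of v] neqs by simp
        next
          case 2 then show ?thesis using eqv[of v] cS[of v] neqs by simp
        next
          case 3 then show ?thesis using eqv[of v] cS[of v] neqs p5 by simp
        next
          case 4 then show ?thesis using eqv[of v] cS[of v] neqs by simp
        next
          case 5 then show ?thesis using eqv[of v] cS[of v] neqs that by simp
        qed
      qed
      have E3: "count A 3 + count E 3 = 1" using eqv[of 3] cS[of 3] neqs by simp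
      have ESm: "count A (Suc m) + count E (Suc m) = 1" using eqv[of "Suc m"] cS[of "Suc m"] neqs by simp
      have En: "count A n + count E n + 1 = p" using eqv[of n] cS[of n] neqs by simp
      have inE: "v = 3 \<or> v = Suc m \<or> v = n" if "count E v \<ge> 1" for v
        using z[of v] that by linarith
      have aV: "a = 3 \<or> a = Suc m \<or> a = n"
      proof -
        have "count E a \<ge> 1" using cE[of a] by simp
        from inE[OF this] show ?thesis .
      qed
      have bV: "b = 3 \<or> b = Suc m \<or> b = n"
      proof -
        have "count E b \<ge> 1" using cE[of b] by simp
        from inE[OF this] show ?thesis .
      qed
      have cV: "c + 2 = n \<or> c + 2 = Suc m \<or> c + 2 = 3"
      proof -
        have "count E (c + 2) \<ge> 1" using cE[of "c+2"] by simp
        from inE[OF this] show ?thesis by auto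
      qed
      have dV: "d + m = n \<or> d + m = Suc m"
      proof -
        have "count E (d + m) \<ge> 1" using cE[of "d+m"] by simp
        from inE[OF this] show ?thesis using m4 by auto
      qed
      have cE3: "count E 3 \<le> 1" using E3 by simp
      have cESm: "count E (Suc m) \<le> 1" using ESm by simp
      define p4 where "p4 = p - 4"
      have pf: "p = p4 + 4" using p5 unfolding p4_def by simp
      have Aform: "A = replicate_mset (p - 1 - count E n) n + replicate_mset (1 - count E 3) 3
           + replicate_mset (1 - count E (Suc m)) (Suc m)"
      proof (rule multiset_eqI)
        fix v
        consider "v = n" | "v = 3" | "v = Suc m" | "v \<noteq> n \<and> v \<noteq> 3 \<and> v \<noteq> Suc m" by blast
        then show "count A v = count (replicate_mset (p - 1 - count E n) n + replicate_mset (1 - count E 3) 3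
           + replicate_mset (1 - count E (Suc m)) (Suc m)) v"
        proof cases
          case 1
          have "count A n = p - 1 - count E n" using En by linarith
          then show ?thesis using 1 neqs by simp
        next
          case 2
          have "count A 3 = 1 - count E 3" using E3 by linarith
          then show ?thesis using 2 neqs by simp
        next
          case 3
          have "count A (Suc m) = 1 - count E (Suc m)" using ESm by linarith
          then show ?thesis using 3 neqs by simp
        next
          case 4 then show ?thesis using z[of v] by simp
        qed
      qed
      from aV show ?thesis
      proof (elim disjE)
        assume a: "a = 3"
        from bV show ?thesis
        proof (elim disjE)
          assume b: "b = 3"
          then show ?thesis using a ab by simp
          next
          assume b: "b = Suc m"
          from cV show ?thesis
          proof (elim disjE)
            assume c: "c + 2 = n"
            from dV show ?thesis
            proof (elim disjE)
              assume d: "d + m = n"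
              have cd: "c = n - 2" "d = n - m" using c d nm m4 by arith+
              have Hg: "H = {(3,0),(m+1,0),(n-m,m),(n-2,2)}" using HH a b cd by auto
              have Ev: "E = {#3, Suc m, n, n#}" using EE a b c d by simp
              have Ag: "A = replicate_mset (p-3) n" using Aform Ev neqs p5 pf by simp
              show ?thesis using rr ss Hg Ag B0 by (simp add: g5_def)
              next
              assume d: "d + m = Suc m"
              have "count E (Suc m) \<ge> 2" using cE[of "Suc m"] a b c d neqs by simp
              then show ?thesis using cESm by simp
            qed
            next
            assume c: "c + 2 = Suc m"
            from dV show ?thesis
            proof (elim disjE)
              assume d: "d + m = n"
              have "count E (Suc m) \<ge> 2" using cE[of "Suc m"] a b c d neqs by simp
              then show ?thesis using cESm by simp
              next
              assume d: "d + m = Suc m"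
              have "count E (Suc m) \<ge> 2" using cE[of "Suc m"] a b c d neqs by simp
              then show ?thesis using cESm by simp
            qed
            next
            assume c: "c + 2 = 3"
            from dV show ?thesis
            proof (elim disjE)
              assume d: "d + m = n"
              have "count E 3 \<ge> 2" using cE[of 3] a b c d neqs by simp
              then show ?thesis using cE3 by simp
              next
              assume d: "d + m = Suc m"
              have "count E 3 \<ge> 2" using cE[of 3] a b c d neqs by simp
              then show ?thesis using cE3 by simp
            qed
          qed
          next
          assume b: "b = n"
          from cV show ?thesis
          proof (elim disjE)
            assume c: "c + 2 = n"
            from dV show ?thesis
            proof (elim disjE)
              assume d: "d + m = n"
              have cd: "c = n - 2" "d = n - m" using c d nm m4 by arith+
              have Hg: "H = {(3,0),(n-m,m),(n-2,2),(n,0)}" using HH a b cd by auto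
              have Ev: "E = {#3, n, n, n#}" using EE a b c d by simp
              have Ag: "A = add_mset (m+1) (replicate_mset (p-4) n)" using Aform Ev neqs p5 pf by simp
              show ?thesis using rr ss Hg Ag B0 by (simp add: g3_def)
              next
              assume d: "d + m = Suc m"
              have cd: "c = n - 2" "d = 1" using c d nm m4 by arith+
              have Hg: "H = {(3,0),(1,m),(n-2,2),(n,0)}" using HH a b cd by auto
              have Ev: "E = {#3, n, n, Suc m#}" using EE a b c d by simp
              have Ag: "A = replicate_mset (p-3) n" using Aform Ev neqs p5 pf by simp
              show ?thesis using rr ss Hg Ag B0 by (simp add: g1_def)
            qed
            next
            assume c: "c + 2 = Suc m"
            from dV show ?thesis
            proof (elim disjE)
              assume d: "d + m = n"
              have cd: "c = m - 1" "d = n - m" using c d nm m4 by arith+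
              have Hg: "H = {(3,0),(m-1,2),(n-m,m),(n,0)}" using HH a b cd by auto
              have Ev: "E = {#3, n, Suc m, n#}" using EE a b c d by simp
              have Ag: "A = replicate_mset (p-3) n" using Aform Ev neqs p5 pf by simp
              show ?thesis using rr ss Hg Ag B0 by (simp add: g4_def)
              next
              assume d: "d + m = Suc m"
              have "count E (Suc m) \<ge> 2" using cE[of "Suc m"] a b c d neqs by simp
              then show ?thesis using cESm by simp
            qed
            next
            assume c: "c + 2 = 3"
            from dV show ?thesis
            proof (elim disjE)
              assume d: "d + m = n"
              have "count E 3 \<ge> 2" using cE[of 3] a b c d neqs by simp
              then show ?thesis using cE3 by simp
              next
              assume d: "d + m = Suc m"
              have "count E 3 \<ge> 2" using cE[of 3] a b c d neqs by simp
              then show ?thesis using cE3 by simp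
            qed
          qed
        qed
        next
        assume a: "a = Suc m"
        from bV show ?thesis
        proof (elim disjE)
          assume b: "b = 3"
          from cV show ?thesis
          proof (elim disjE)
            assume c: "c + 2 = n"
            from dV show ?thesis
            proof (elim disjE)
              assume d: "d + m = n"
              have cd: "c = n - 2" "d = n - m" using c d nm m4 by arith+
              have Hg: "H = {(3,0),(m+1,0),(n-m,m),(n-2,2)}" using HH a b cd by auto
              have Ev: "E = {#Suc m, 3, n, n#}" using EE a b c d by simp
              have Ag: "A = replicate_mset (p-3) n" using Aform Ev neqs p5 pf by simp
              show ?thesis using rr ss Hg Ag B0 by (simp add: g5_def)
              next
              assume d: "d + m = Suc m"
              have "count E (Suc m) \<ge> 2" using cE[of "Suc m"] a b c d neqs by simp
              then show ?thesis using cESm by simp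
            qed
            next
            assume c: "c + 2 = Suc m"
            from dV show ?thesis
            proof (elim disjE)
              assume d: "d + m = n"
              have "count E (Suc m) \<ge> 2" using cE[of "Suc m"] a b c d neqs by simp
              then show ?thesis using cESm by simp
              next
              assume d: "d + m = Suc m"
              have "count E (Suc m) \<ge> 2" using cE[of "Suc m"] a b c d neqs by simp
              then show ?thesis using cESm by simp
            qed
            next
            assume c: "c + 2 = 3"
            from dV show ?thesis
            proof (elim disjE)
              assume d: "d + m = n"
              have "count E 3 \<ge> 2" using cE[of 3] a b c d neqs by simp
              then show ?thesis using cE3 by simp
              next
              assume d: "d + m = Suc m"
              have "count E 3 \<ge> 2" using cE[of 3] a b c d neqs by simp
              then show ?thesis using cE3 by simp
            qed
          qed
          next
          assume b: "b = Suc m"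
          then show ?thesis using a ab by simp
          next
          assume b: "b = n"
          from cV show ?thesis
          proof (elim disjE)
            assume c: "c + 2 = n"
            from dV show ?thesis
            proof (elim disjE)
              assume d: "d + m = n"
              have cd: "c = n - 2" "d = n - m" using c d nm m4 by arith+
              have Hg: "H = {(m+1,0),(n-m,m),(n-2,2),(n,0)}" using HH a b cd by auto
              have Ev: "E = {#Suc m, n, n, n#}" using EE a b c d by simp
              have Ag: "A = add_mset 3 (replicate_mset (p-4) n)" using Aform Ev neqs p5 pf by simp
              show ?thesis using rr ss Hg Ag B0 by (simp add: g6_def)
              next
              assume d: "d + m = Suc m"
              have "count E (Suc m) \<ge> 2" using cE[of "Suc m"] a b c d neqs by simp
              then show ?thesis using cESm by simp
            qed
            next
            assume c: "c + 2 = Suc m"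
            from dV show ?thesis
            proof (elim disjE)
              assume d: "d + m = n"
              have "count E (Suc m) \<ge> 2" using cE[of "Suc m"] a b c d neqs by simp
              then show ?thesis using cESm by simp
              next
              assume d: "d + m = Suc m"
              have "count E (Suc m) \<ge> 2" using cE[of "Suc m"] a b c d neqs by simp
              then show ?thesis using cESm by simp
            qed
            next
            assume c: "c + 2 = 3"
            from dV show ?thesis
            proof (elim disjE)
              assume d: "d + m = n"
              have cd: "c = 1" "d = n - m" using c d nm m4 by arith+
              have Hg: "H = {(1,2),(m+1,0),(n-m,m),(n,0)}" using HH a b cd by auto
              have Ev: "E = {#Suc m, n, 3, n#}" using EE a b c d by simp
              have Ag: "A = replicate_mset (p-3) n" using Aform Ev neqs p5 pf by simp
              show ?thesis using rr ss Hg Ag B0 by (simp add: g2_def)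
              next
              assume d: "d + m = Suc m"
              have "count E (Suc m) \<ge> 2" using cE[of "Suc m"] a b c d neqs by simp
              then show ?thesis using cESm by simp
            qed
          qed
        qed
        next
        assume a: "a = n"
        from bV show ?thesis
        proof (elim disjE)
          assume b: "b = 3"
          from cV show ?thesis
          proof (elim disjE)
            assume c: "c + 2 = n"
            from dV show ?thesis
            proof (elim disjE)
              assume d: "d + m = n"
              have cd: "c = n - 2" "d = n - m" using c d nm m4 by arith+
              have Hg: "H = {(3,0),(n-m,m),(n-2,2),(n,0)}" using HH a b cd by auto
              have Ev: "E = {#n, 3, n, n#}" using EE a b c d by simp
              have Ag: "A = add_mset (m+1) (replicate_mset (p-4) n)" using Aform Ev neqs p5 pf by simp
              show ?thesis using rr ss Hg Ag B0 by (simp add: g3_def)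
              next
              assume d: "d + m = Suc m"
              have cd: "c = n - 2" "d = 1" using c d nm m4 by arith+
              have Hg: "H = {(3,0),(1,m),(n-2,2),(n,0)}" using HH a b cd by auto
              have Ev: "E = {#n, 3, n, Suc m#}" using EE a b c d by simp
              have Ag: "A = replicate_mset (p-3) n" using Aform Ev neqs p5 pf by simp
              show ?thesis using rr ss Hg Ag B0 by (simp add: g1_def)
            qed
            next
            assume c: "c + 2 = Suc m"
            from dV show ?thesis
            proof (elim disjE)
              assume d: "d + m = n"
              have cd: "c = m - 1" "d = n - m" using c d nm m4 by arith+
              have Hg: "H = {(3,0),(m-1,2),(n-m,m),(n,0)}" using HH a b cd by auto
              have Ev: "E = {#n, 3, Suc m, n#}" using EE a b c d by simp
              have Ag: "A = replicate_mset (p-3) n" using Aform Ev neqs p5 pf by simp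
              show ?thesis using rr ss Hg Ag B0 by (simp add: g4_def)
              next
              assume d: "d + m = Suc m"
              have "count E (Suc m) \<ge> 2" using cE[of "Suc m"] a b c d neqs by simp
              then show ?thesis using cESm by simp
            qed
            next
            assume c: "c + 2 = 3"
            from dV show ?thesis
            proof (elim disjE)
              assume d: "d + m = n"
              have "count E 3 \<ge> 2" using cE[of 3] a b c d neqs by simp
              then show ?thesis using cE3 by simp
              next
              assume d: "d + m = Suc m"
              have "count E 3 \<ge> 2" using cE[of 3] a b c d neqs by simp
              then show ?thesis using cE3 by simp
            qed
          qed
          next
          assume b: "b = Suc m"
          from cV show ?thesis
          proof (elim disjE)
            assume c: "c + 2 = n"
            from dV show ?thesis
            proof (elim disjE)
              assume d: "d + m = n"
              have cd: "c = n - 2" "d = n - m" using c d nm m4 by arith+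
              have Hg: "H = {(m+1,0),(n-m,m),(n-2,2),(n,0)}" using HH a b cd by auto
              have Ev: "E = {#n, Suc m, n, n#}" using EE a b c d by simp
              have Ag: "A = add_mset 3 (replicate_mset (p-4) n)" using Aform Ev neqs p5 pf by simp
              show ?thesis using rr ss Hg Ag B0 by (simp add: g6_def)
              next
              assume d: "d + m = Suc m"
              have "count E (Suc m) \<ge> 2" using cE[of "Suc m"] a b c d neqs by simp
              then show ?thesis using cESm by simp
            qed
            next
            assume c: "c + 2 = Suc m"
            from dV show ?thesis
            proof (elim disjE)
              assume d: "d + m = n"
              have "count E (Suc m) \<ge> 2" using cE[of "Suc m"] a b c d neqs by simp
              then show ?thesis using cESm by simp
              next
              assume d: "d + m = Suc m"
              have "count E (Suc m) \<ge> 2" using cE[of "Suc m"] a b c d neqs by simp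
              then show ?thesis using cESm by simp
            qed
            next
            assume c: "c + 2 = 3"
            from dV show ?thesis
            proof (elim disjE)
              assume d: "d + m = n"
              have cd: "c = 1" "d = n - m" using c d nm m4 by arith+
              have Hg: "H = {(1,2),(m+1,0),(n-m,m),(n,0)}" using HH a b cd by auto
              have Ev: "E = {#n, Suc m, 3, n#}" using EE a b c d by simp
              have Ag: "A = replicate_mset (p-3) n" using Aform Ev neqs p5 pf by simp
              show ?thesis using rr ss Hg Ag B0 by (simp add: g2_def)
              next
              assume d: "d + m = Suc m"
              have "count E (Suc m) \<ge> 2" using cE[of "Suc m"] a b c d neqs by simp
              then show ?thesis using cESm by simp
            qed
          qed
          next
          assume b: "b = n"
          then show ?thesis using a ab by simp
        qed
      qed
    qed
  qed
qed

lemma lin_aux: "(t::nat) + 2 * S + a = 2 * E + 2 * A \<Longrightarrow> A + E + x + y + (r + 1) = u + v + w + S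
   \<Longrightarrow> a + r + 1 = s \<Longrightarrow> t + 2 * (x + y) + r + 1 + s = 2 * (u + v + w)"
  by presburger

lemma degrees_conv:
  fixes p m n s r :: nat and H B A
  assumes p5: "p \<ge> 5" and s2: "2 \<le> s" and fin: "finite H"
    and sA: "size A + r + 1 = s"
    and V: "val p (A + End H B + {#n, m#} + replicate_mset (Suc r) 0) =
            val p ({#Suc n, Suc m#} + replicate_mset s 2 + Sst H B)"
  shows "t_deg p (H,B,A) = 2*(p-1) * (p^n + p^m + s*p + s) + s - r - 1"
proof -
  obtain p0 where p0: "p = Suc p0" using p5 by (cases p) auto
  have di: "t_deg p (H,B,A) + 2 * val p (Sst H B) + size A = 2 * val p (End H B) + 2 * val p A"
    using deg_identity[OF _ fin] p5 by simp
  have V2: "val p A + val p (End H B) + p^n + p^m + (r + 1) = p * p^n + p * p^m + s * p^2 + val p (Sst H B)"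
    using V by (simp add: algebra_simps)
  have k: "t_deg p (H,B,A) + 2 * (p^n + p^m) + r + 1 + s = 2 * (p * p^n + p * p^m + s * p^2)"
    by (rule lin_aux[OF di V2 sA])
  have id: "2 * (p * p^n + p * p^m + s * p^2) = 2 * p0 * (p^n + p^m + s*p + s) + 2 * (p^n + p^m) + 2 * s"
    unfolding p0 by (simp add: algebra_simps power2_eq_square)
  have "t_deg p (H,B,A) + r + 1 = 2 * p0 * (p^n + p^m + s*p + s) + s"
    using k id by linarith
  moreover have "2 * p0 * (p^n + p^m + s*p + s) \<ge> r + 1"
  proof -
    have "p0 \<ge> 4" using p5 p0 by simp
    then have "2 * p0 * (p^n + p^m + s*p + s) \<ge> 8 * s" by (simp add: mult_le_mono)
    then show ?thesis using sA by linarith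
  qed
  ultimately show ?thesis using p0 by simp
qed

lemma memb:
  fixes p m n :: nat and H A
  assumes p5: "p \<ge> 5" and fin: "finite H" and hpos: "\<forall>(i,j)\<in>H. i > 0" and cH: "card H = 4"
    and sA: "size A = p - 3"
    and V: "val p (A + End H {#} + {#n, m#} + replicate_mset 2 0) =
            val p ({#Suc n, Suc m#} + replicate_mset (p - 1) 2 + Sst H {#})"
  shows "(H, {#}, A) \<in> E1_basis p (p - 1 + 3 - 1) (2*(p-1) * (p^n + p^m + (p-1)*p + (p-1)) + (p-1) - 1 - 1)"
proof -
  have v: "valid_mono (H, {#}, A)" unfolding valid_mono_def using fin hpos by auto
  have sd: "s_deg (H, {#}, A) = p - 1 + 3 - 1" unfolding s_deg_def using cH sA p5 by simp
  have td: "t_deg p (H, {#}, A) = 2*(p-1) * (p^n + p^m + (p-1)*p + (p-1)) + (p-1) - 1 - 1"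
  proof (rule degrees_conv[OF p5 _ fin])
    show "2 \<le> p - 1" using p5 by simp
    show "size A + 1 + 1 = p - 1" using sA p5 by simp
    show "val p (A + End H {#} + {#n, m#} + replicate_mset (Suc 1) 0) =
      val p ({#Suc n, Suc m#} + replicate_mset (p - 1) 2 + Sst H {#})" using V by (simp add: numeral_2_eq_2)
  qed
  show ?thesis unfolding E1_basis_def using v sd td by simp
qed

lemma g1_in:
  fixes p m n :: nat
  assumes p5: "p \<ge> 5" and m4: "m \<ge> 4" and nm: "n \<ge> m + 2"
  shows "g1 p m n \<in> E1_basis p (p - 1 + 3 - 1) (2*(p-1)*(p^n+p^m+(p-1)*p+(p-1)) + (p-1) - 1 - 1)"
proof -
  define p4 where "p4 = p - 5"
  have pf: "p = p4 + 5" using p5 unfolding p4_def by simp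
  have ef: "n - 2 + 2 = n" "m - 1 + 2 = Suc m" "n - m + m = n" "m - 2 + 2 = m" using m4 nm by auto
  have Hm: "mset_set {(3,0),(1,m),(n-2,2),(n,0)} = {#(3,0),(1,m),(n-2,2),(n,0)#}" using m4 nm by simp
  have cH: "card {(3,0),(1,m),(n-2,2),(n,0)} = 4" using m4 nm by simp
  show ?thesis unfolding g1_def
  proof (rule memb[OF p5])
    show "finite {(3,0),(1,m),(n-2,2),(n,0)}" by simp
    show "\<forall>(i,j)\<in>{(3,0),(1,m),(n-2,2),(n,0)}. i > 0" using m4 nm by auto
    show "card {(3,0),(1,m),(n-2,2),(n,0)} = 4" by (rule cH)
    show "size (replicate_mset (p-3) n) = p - 3" unfolding pf by simp
    show "val p (replicate_mset (p-3) n + End {(3,0),(1,m),(n-2,2),(n,0)} {#} + {#n, m#} + replicate_mset 2 0) =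
            val p ({#Suc n, Suc m#} + replicate_mset (p - 1) 2 + Sst {(3,0),(1,m),(n-2,2),(n,0)} {#})"
      unfolding End_def Sst_def Hm using ef by (simp add: pf algebra_simps power2_eq_square power3_eq_cube)
  qed
qed

lemma g2_in:
  fixes p m n :: nat
  assumes p5: "p \<ge> 5" and m4: "m \<ge> 4" and nm: "n \<ge> m + 2"
  shows "g2 p m n \<in> E1_basis p (p - 1 + 3 - 1) (2*(p-1)*(p^n+p^m+(p-1)*p+(p-1)) + (p-1) - 1 - 1)"
proof -
  define p4 where "p4 = p - 5"
  have pf: "p = p4 + 5" using p5 unfolding p4_def by simp
  have ef: "n - 2 + 2 = n" "m - 1 + 2 = Suc m" "n - m + m = n" "m - 2 + 2 = m" using m4 nm by auto
  have Hm: "mset_set {(1,2),(m+1,0),(n-m,m),(n,0)} = {#(1,2),(m+1,0),(n-m,m),(n,0)#}" using m4 nm by simp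
  have cH: "card {(1,2),(m+1,0),(n-m,m),(n,0)} = 4" using m4 nm by simp
  show ?thesis unfolding g2_def
  proof (rule memb[OF p5])
    show "finite {(1,2),(m+1,0),(n-m,m),(n,0)}" by simp
    show "\<forall>(i,j)\<in>{(1,2),(m+1,0),(n-m,m),(n,0)}. i > 0" using m4 nm by auto
    show "card {(1,2),(m+1,0),(n-m,m),(n,0)} = 4" by (rule cH)
    show "size (replicate_mset (p-3) n) = p - 3" unfolding pf by simp
    show "val p (replicate_mset (p-3) n + End {(1,2),(m+1,0),(n-m,m),(n,0)} {#} + {#n, m#} + replicate_mset 2 0) =
            val p ({#Suc n, Suc m#} + replicate_mset (p - 1) 2 + Sst {(1,2),(m+1,0),(n-m,m),(n,0)} {#})"
      unfolding End_def Sst_def Hm using ef by (simp add: pf algebra_simps power2_eq_square power3_eq_cube)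
  qed
qed

lemma g3_in:
  fixes p m n :: nat
  assumes p5: "p \<ge> 5" and m4: "m \<ge> 4" and nm: "n \<ge> m + 2"
  shows "g3 p m n \<in> E1_basis p (p - 1 + 3 - 1) (2*(p-1)*(p^n+p^m+(p-1)*p+(p-1)) + (p-1) - 1 - 1)"
proof -
  define p4 where "p4 = p - 5"
  have pf: "p = p4 + 5" using p5 unfolding p4_def by simp
  have ef: "n - 2 + 2 = n" "m - 1 + 2 = Suc m" "n - m + m = n" "m - 2 + 2 = m" using m4 nm by auto
  have Hm: "mset_set {(3,0),(n-m,m),(n-2,2),(n,0)} = {#(3,0),(n-m,m),(n-2,2),(n,0)#}" using m4 nm by simp
  have cH: "card {(3,0),(n-m,m),(n-2,2),(n,0)} = 4" using m4 nm by simp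
  show ?thesis unfolding g3_def
  proof (rule memb[OF p5])
    show "finite {(3,0),(n-m,m),(n-2,2),(n,0)}" by simp
    show "\<forall>(i,j)\<in>{(3,0),(n-m,m),(n-2,2),(n,0)}. i > 0" using m4 nm by auto
    show "card {(3,0),(n-m,m),(n-2,2),(n,0)} = 4" by (rule cH)
    show "size (add_mset (m+1) (replicate_mset (p-4) n)) = p - 3" unfolding pf by simp
    show "val p (add_mset (m+1) (replicate_mset (p-4) n) + End {(3,0),(n-m,m),(n-2,2),(n,0)} {#} + {#n, m#} + replicate_mset 2 0) =
            val p ({#Suc n, Suc m#} + replicate_mset (p - 1) 2 + Sst {(3,0),(n-m,m),(n-2,2),(n,0)} {#})"
      unfolding End_def Sst_def Hm using ef by (simp add: pf algebra_simps power2_eq_square power3_eq_cube)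
  qed
qed

lemma g4_in:
  fixes p m n :: nat
  assumes p5: "p \<ge> 5" and m4: "m \<ge> 4" and nm: "n \<ge> m + 2"
  shows "g4 p m n \<in> E1_basis p (p - 1 + 3 - 1) (2*(p-1)*(p^n+p^m+(p-1)*p+(p-1)) + (p-1) - 1 - 1)"
proof -
  define p4 where "p4 = p - 5"
  have pf: "p = p4 + 5" using p5 unfolding p4_def by simp
  have ef: "n - 2 + 2 = n" "m - 1 + 2 = Suc m" "n - m + m = n" "m - 2 + 2 = m" using m4 nm by auto
  have Hm: "mset_set {(3,0),(m-1,2),(n-m,m),(n,0)} = {#(3,0),(m-1,2),(n-m,m),(n,0)#}" using m4 nm by simp
  have cH: "card {(3,0),(m-1,2),(n-m,m),(n,0)} = 4" using m4 nm by simp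
  show ?thesis unfolding g4_def
  proof (rule memb[OF p5])
    show "finite {(3,0),(m-1,2),(n-m,m),(n,0)}" by simp
    show "\<forall>(i,j)\<in>{(3,0),(m-1,2),(n-m,m),(n,0)}. i > 0" using m4 nm by auto
    show "card {(3,0),(m-1,2),(n-m,m),(n,0)} = 4" by (rule cH)
    show "size (replicate_mset (p-3) n) = p - 3" unfolding pf by simp
    show "val p (replicate_mset (p-3) n + End {(3,0),(m-1,2),(n-m,m),(n,0)} {#} + {#n, m#} + replicate_mset 2 0) =
            val p ({#Suc n, Suc m#} + replicate_mset (p - 1) 2 + Sst {(3,0),(m-1,2),(n-m,m),(n,0)} {#})"
      unfolding End_def Sst_def Hm using ef by (simp add: pf algebra_simps power2_eq_square power3_eq_cube)
  qed
qed

lemma g5_in: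
  fixes p m n :: nat
  assumes p5: "p \<ge> 5" and m4: "m \<ge> 4" and nm: "n \<ge> m + 2"
  shows "g5 p m n \<in> E1_basis p (p - 1 + 3 - 1) (2*(p-1)*(p^n+p^m+(p-1)*p+(p-1)) + (p-1) - 1 - 1)"
proof -
  define p4 where "p4 = p - 5"
  have pf: "p = p4 + 5" using p5 unfolding p4_def by simp
  have ef: "n - 2 + 2 = n" "m - 1 + 2 = Suc m" "n - m + m = n" "m - 2 + 2 = m" using m4 nm by auto
  have Hm: "mset_set {(3,0),(m+1,0),(n-m,m),(n-2,2)} = {#(3,0),(m+1,0),(n-m,m),(n-2,2)#}" using m4 nm by simp
  have cH: "card {(3,0),(m+1,0),(n-m,m),(n-2,2)} = 4" using m4 nm by simp
  show ?thesis unfolding g5_def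
  proof (rule memb[OF p5])
    show "finite {(3,0),(m+1,0),(n-m,m),(n-2,2)}" by simp
    show "\<forall>(i,j)\<in>{(3,0),(m+1,0),(n-m,m),(n-2,2)}. i > 0" using m4 nm by auto
    show "card {(3,0),(m+1,0),(n-m,m),(n-2,2)} = 4" by (rule cH)
    show "size (replicate_mset (p-3) n) = p - 3" unfolding pf by simp
    show "val p (replicate_mset (p-3) n + End {(3,0),(m+1,0),(n-m,m),(n-2,2)} {#} + {#n, m#} + replicate_mset 2 0) =
            val p ({#Suc n, Suc m#} + replicate_mset (p - 1) 2 + Sst {(3,0),(m+1,0),(n-m,m),(n-2,2)} {#})"
      unfolding End_def Sst_def Hm using ef by (simp add: pf algebra_simps power2_eq_square power3_eq_cube)
  qed
qed

lemma g6_in: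
  fixes p m n :: nat
  assumes p5: "p \<ge> 5" and m4: "m \<ge> 4" and nm: "n \<ge> m + 2"
  shows "g6 p m n \<in> E1_basis p (p - 1 + 3 - 1) (2*(p-1)*(p^n+p^m+(p-1)*p+(p-1)) + (p-1) - 1 - 1)"
proof -
  define p4 where "p4 = p - 5"
  have pf: "p = p4 + 5" using p5 unfolding p4_def by simp
  have ef: "n - 2 + 2 = n" "m - 1 + 2 = Suc m" "n - m + m = n" "m - 2 + 2 = m" using m4 nm by auto
  have Hm: "mset_set {(m+1,0),(n-m,m),(n-2,2),(n,0)} = {#(m+1,0),(n-m,m),(n-2,2),(n,0)#}" using m4 nm by simp
  have cH: "card {(m+1,0),(n-m,m),(n-2,2),(n,0)} = 4" using m4 nm by simp
  show ?thesis unfolding g6_def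
  proof (rule memb[OF p5])
    show "finite {(m+1,0),(n-m,m),(n-2,2),(n,0)}" by simp
    show "\<forall>(i,j)\<in>{(m+1,0),(n-m,m),(n-2,2),(n,0)}. i > 0" using m4 nm by auto
    show "card {(m+1,0),(n-m,m),(n-2,2),(n,0)} = 4" by (rule cH)
    show "size (add_mset 3 (replicate_mset (p-4) n)) = p - 3" unfolding pf by simp
    show "val p (add_mset 3 (replicate_mset (p-4) n) + End {(m+1,0),(n-m,m),(n-2,2),(n,0)} {#} + {#n, m#} + replicate_mset 2 0) =
            val p ({#Suc n, Suc m#} + replicate_mset (p - 1) 2 + Sst {(m+1,0),(n-m,m),(n-2,2),(n,0)} {#})"
      unfolding End_def Sst_def Hm using ef by (simp add: pf algebra_simps power2_eq_square power3_eq_cube)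
  qed
qed

lemma g7_in:
  fixes p m n :: nat
  assumes p5: "p \<ge> 5" and m4: "m \<ge> 4" and nm: "n \<ge> m + 2"
  shows "g7 p m n \<in> E1_basis p (p - 1 + 3 - 1) (2*(p-1)*(p^n+p^m+(p-1)*p+(p-1)) + (p-1) - 1 - 1)"
proof -
  define p4 where "p4 = p - 5"
  have pf: "p = p4 + 5" using p5 unfolding p4_def by simp
  have ef: "n - 2 + 2 = n" "m - 1 + 2 = Suc m" "n - m + m = n" "m - 2 + 2 = m" using m4 nm by auto
  have Hm: "mset_set {(3,0),(m,0),(m-2,2),(1,n)} = {#(3,0),(m,0),(m-2,2),(1,n)#}" using m4 nm by simp
  have cH: "card {(3,0),(m,0),(m-2,2),(1,n)} = 4" using m4 nm by simp
  show ?thesis unfolding g7_def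
  proof (rule memb[OF p5])
    show "finite {(3,0),(m,0),(m-2,2),(1,n)}" by simp
    show "\<forall>(i,j)\<in>{(3,0),(m,0),(m-2,2),(1,n)}. i > 0" using m4 nm by auto
    show "card {(3,0),(m,0),(m-2,2),(1,n)} = 4" by (rule cH)
    show "size (replicate_mset (p-3) m) = p - 3" unfolding pf by simp
    show "val p (replicate_mset (p-3) m + End {(3,0),(m,0),(m-2,2),(1,n)} {#} + {#n, m#} + replicate_mset 2 0) =
            val p ({#Suc n, Suc m#} + replicate_mset (p - 1) 2 + Sst {(3,0),(m,0),(m-2,2),(1,n)} {#})"
      unfolding End_def Sst_def Hm using ef by (simp add: pf algebra_simps power2_eq_square power3_eq_cube)
  qed
qed

lemma neqH: "x \<in> H1 \<Longrightarrow> x \<notin> H2 \<Longrightarrow> (H1,B1,A1) \<noteq> (H2,B2,A2)" by auto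
lemma neqA: "count A1 v \<noteq> count A2 v \<Longrightarrow> (H1,B1,A1) \<noteq> (H2,B2,A2)" by auto

lemma card7:
  fixes p m n :: nat
  assumes p5: "p \<ge> 5" and m4: "m \<ge> 4" and nm: "n \<ge> m + 2"
  shows "card {g1 p m n, g2 p m n, g3 p m n, g4 p m n, g5 p m n, g6 p m n, g7 p m n} = 7"
proof -
  have d1: "g1 p m n \<noteq> g2 p m n" unfolding g1_def g2_def by (rule neqH[of "(1,m)"]) (use m4 nm in auto)
  have d2: "g1 p m n \<noteq> g3 p m n" unfolding g1_def g3_def by (rule neqA[of _ "Suc m"]) (use m4 nm p5 in auto)
  have d3: "g1 p m n \<noteq> g4 p m n" unfolding g1_def g4_def by (rule neqH[of "(1,m)"]) (use m4 nm in auto)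
  have d4: "g1 p m n \<noteq> g5 p m n" unfolding g1_def g5_def by (rule neqH[of "(1,m)"]) (use m4 nm in auto)
  have d5: "g1 p m n \<noteq> g6 p m n" unfolding g1_def g6_def by (rule neqA[of _ 3]) (use m4 nm p5 in auto)
  have d6: "g1 p m n \<noteq> g7 p m n" unfolding g1_def g7_def by (rule neqA[of _ n]) (use m4 nm p5 in auto)
  have d7: "g2 p m n \<noteq> g3 p m n" unfolding g2_def g3_def by (rule neqA[of _ "Suc m"]) (use m4 nm p5 in auto)
  have d8: "g2 p m n \<noteq> g4 p m n" unfolding g2_def g4_def by (rule neqH[of "(1,2)"]) (use m4 nm in auto)
  have d9: "g2 p m n \<noteq> g5 p m n" unfolding g2_def g5_def by (rule neqH[of "(1,2)"]) (use m4 nm in auto)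
  have d10: "g2 p m n \<noteq> g6 p m n" unfolding g2_def g6_def by (rule neqA[of _ 3]) (use m4 nm p5 in auto)
  have d11: "g2 p m n \<noteq> g7 p m n" unfolding g2_def g7_def by (rule neqA[of _ n]) (use m4 nm p5 in auto)
  have d12: "g3 p m n \<noteq> g4 p m n" unfolding g3_def g4_def by (rule neqA[of _ "Suc m"]) (use m4 nm p5 in auto)
  have d13: "g3 p m n \<noteq> g5 p m n" unfolding g3_def g5_def by (rule neqA[of _ "Suc m"]) (use m4 nm p5 in auto)
  have d14: "g3 p m n \<noteq> g6 p m n" unfolding g3_def g6_def by (rule neqA[of _ "Suc m"]) (use m4 nm p5 in auto)
  have d15: "g3 p m n \<noteq> g7 p m n" unfolding g3_def g7_def by (rule neqA[of _ "Suc m"]) (use m4 nm p5 in auto)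
  have d16: "g4 p m n \<noteq> g5 p m n" unfolding g4_def g5_def by (rule neqH[of "(m-1,2)"]) (use m4 nm in auto)
  have d17: "g4 p m n \<noteq> g6 p m n" unfolding g4_def g6_def by (rule neqA[of _ 3]) (use m4 nm p5 in auto)
  have d18: "g4 p m n \<noteq> g7 p m n" unfolding g4_def g7_def by (rule neqA[of _ n]) (use m4 nm p5 in auto)
  have d19: "g5 p m n \<noteq> g6 p m n" unfolding g5_def g6_def by (rule neqA[of _ 3]) (use m4 nm p5 in auto)
  have d20: "g5 p m n \<noteq> g7 p m n" unfolding g5_def g7_def by (rule neqA[of _ n]) (use m4 nm p5 in auto)
  have d21: "g6 p m n \<noteq> g7 p m n" unfolding g6_def g7_def by (rule neqA[of _ 3]) (use m4 nm p5 in auto)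
  have "distinct [g1 p m n, g2 p m n, g3 p m n, g4 p m n, g5 p m n, g6 p m n, g7 p m n]"
    using d1 d2 d3 d4 d5 d6 d7 d8 d9 d10 d11 d12 d13 d14 d15 d16 d17 d18 d19 d20 d21 by auto
  from distinct_card[OF this] show ?thesis by simp
qed

theorem lemma3p1:
  fixes p m n s r :: nat
  assumes "prime p" and "p \<ge> 5"
    and "n \<ge> m + 2" and "m + 2 > 5"
    and "2 \<le> s" and "s < p"
    and "1 \<le> r" and "r \<le> s + 3"
  shows "E1_basis p (s + 3 - r) (2*(p-1) * (p^n + p^m + s*p + s) + s - r - 1) =
           (if r = 1 \<and> s = p - 1
            then {g1 p m n, g2 p m n, g3 p m n, g4 p m n, g5 p m n, g6 p m n, g7 p m n}
            else {})
       \<and> card {g1 p m n, g2 p m n, g3 p m n, g4 p m n, g5 p m n, g6 p m n, g7 p m n} = 7"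
proof -
  have p5: "p \<ge> 5" and nm: "n \<ge> m + 2" and s2: "2 \<le> s" and sp: "s < p" and r1: "1 \<le> r"
    and rs: "r \<le> s + 3" using assms by auto
  have m4: "m \<ge> 4" using assms by simp
  define G where "G = {g1 p m n, g2 p m n, g3 p m n, g4 p m n, g5 p m n, g6 p m n, g7 p m n}"
  have c7: "card G = 7" unfolding G_def by (rule card7[OF p5 m4 nm])
  have sub: "E1_basis p (s + 3 - r) (2*(p-1) * (p^n + p^m + s*p + s) + s - r - 1)
      \<subseteq> (if r = 1 \<and> s = p - 1 then G else {})"
  proof
    fix M assume M: "M \<in> E1_basis p (s + 3 - r) (2*(p-1) * (p^n + p^m + s*p + s) + s - r - 1)"
    obtain H B A where MM: "M = (H,B,A)" by (metis prod_cases3)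
    have v: "valid_mono (H,B,A)" and sd: "s_deg (H,B,A) = s + 3 - r"
      and td: "t_deg p (H,B,A) = 2*(p-1) * (p^n + p^m + s*p + s) + s - r - 1"
      using M unfolding E1_basis_def MM by auto
    have fin: "finite H" and hpos: "\<forall>(i,j)\<in>H. i > 0" using v unfolding valid_mono_def by auto
    have sd': "card H + 2 * size B + size A = s + 3 - r" using sd unfolding s_deg_def by simp
    have D: "size A + r + 1 = s \<and> card H + 2 * size B = 4 \<and>
     val p (A + End H B + {#n, m#} + replicate_mset (Suc r) 0) =
     val p ({#Suc n, Suc m#} + replicate_mset s 2 + Sst H B)"
      by (rule degrees[OF p5 s2 sp r1 rs fin sd' td])
    have C: "r = 1 \<and> s = p - 1 \<and> (H,B,A) \<in> G"
      using classify[OF p5 m4 nm s2 sp r1 fin hpos] D unfolding G_def by blast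
    then show "M \<in> (if r = 1 \<and> s = p - 1 then G else {})" using MM by simp
  qed
  have sup: "G \<subseteq> E1_basis p (s + 3 - r) (2*(p-1) * (p^n + p^m + s*p + s) + s - r - 1)"
    if rs1: "r = 1 \<and> s = p - 1"
  proof -
    have e: "E1_basis p (s + 3 - r) (2*(p-1) * (p^n + p^m + s*p + s) + s - r - 1)
       = E1_basis p (p - 1 + 3 - 1) (2*(p-1)*(p^n+p^m+(p-1)*p+(p-1)) + (p-1) - 1 - 1)"
      using rs1 by simp
    show ?thesis unfolding e G_def
      using g1_in[OF p5 m4 nm] g2_in[OF p5 m4 nm] g3_in[OF p5 m4 nm] g4_in[OF p5 m4 nm]
        g5_in[OF p5 m4 nm] g6_in[OF p5 m4 nm] g7_in[OF p5 m4 nm] by simp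
  qed
  have "E1_basis p (s + 3 - r) (2*(p-1) * (p^n + p^m + s*p + s) + s - r - 1) =
           (if r = 1 \<and> s = p - 1 then G else {})"
  proof (cases "r = 1 \<and> s = p - 1")
    case True then show ?thesis using sub sup by auto
  next
    case False then show ?thesis using sub by auto
  qed
  then show ?thesis using c7 unfolding G_def by simp
qed

end
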